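(* In the Hidden Hallucination algorithm described in the context, for every phase $\ell$, the censored ledger $\lambda_{\mathrm{cens},\ell}$ and the honest ledger $\lambda_{\mathrm{hon},\ell}$ are both hygienic; that is, for $\hat\lambda\in\{\lambda_{\mathrm{cens},\ell},\lambda_{\mathrm{hon},\ell}\}$, \[\Pr[\mu_\star\in\cdot\mid\hat\lambda]=\Pr_{\mathrm{can}}[\mu_\star\in\cdot\mid\hat\lambda],\] where the left side is the true Bayesian posterior of $\mu_\star$ given the realized value of the random ledger $\hat\lambda$ (including its policies and censoring set) generated by the algorithm and the agents' behavior.
   Context: MDPs. Fix positive integers $S,A,H$. An MDP model $\mu$ specifies for each triple $(x,a,h)\in[S]\times[A]\times[H]$ a reward distribution $R_\mu(x,a,h)$ on $[0,1]$ (all supported on a common countable set) with mean $r_\mu(x,a,h)$, transition distribution $p_\mu(\cdot\mid x,a,h)$ on $[S]$ and initial distribution $p_\mu(\cdot\mid0)$; an episode generates a trajectory $(x_h,a_h,r_h,h)_{h\in[H]}$ with $x_1\sim p_\mu(\cdot\mid0)$, $r_h\sim R_\mu(x_h,a_h,h)$, $x_{h+1}\sim p_\mu(\cdot\mid x_h,a_h,h)$. $\Pi_{\mathrm{mkv}}$ is the set of deterministic Markov policies $\pi:[S]\times[H]\to[A]$; $V(\pi,\mu)$ is the expected total reward. Incentivized RL. A prior $\mathbf{p}$ over models is known to all; $\mu_\star\sim\mathbf{p}$. In each episode $k$ the principal chooses a signal $\sigma_k$ via a known algorithm; agent $k$ chooses $\pi_k\in\arg\max_{\pi\in\Pi_{\mathrm{mkv}}}\mathbb{E}[V(\pi,\mu_\star)\mid\sigma_k]$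 (fixed known tie-breaking); $\pi_k$ is run in $\mu_\star$ producing trajectory $\tau_k$ observed by the principal. Ledgers and canonical posteriors. A ledger $\lambda$ consists of a censoring set $\mathcal{U}_\lambda\subseteq[S]\times[A]\times[H]$ and a finite sequence $(\pi_i,\tau_i)_{i=1}^m$ of policies and trajectories with the rewards at stages $h$ with $(x_h,a_h,h)\in\mathcal{U}_\lambda$ removed. The canonical posterior $\Pr_{\mathrm{can}}[\cdot\mid\lambda]$ is the conditional law of $\mu_\star$ given $\hat\lambda'=\lambda$, where $\mu_\star\sim\mathbf{p}$ and $\hat\lambda'$ is obtained by running each of the fixed (treated as non-random) policies $\pi_1,\dots,\pi_m$ once, independently, in $\mu_\star$ and removing rewards at triples in $\mathcal{U}_\lambda$. Algorithm (Hidden Hallucination), inputs $N_{\mathrm{ph}},n_{\mathrm{lrn}},\varepsilon_{\mathrm{pun}}$. Phase $\ell$ = episodes $(\ell-1)N_{\mathrm{ph}}+1,\dots,\ell N_{\mathrm{ph}}$, hallucination episode $k_\ell$ uniform in the phase. $\mathcal{U}_\ell$ = set of triples visited in fewer than $n_{\mathrm{lrn}}$ of the episodes $k_1,\dots,k_{\ell-1}$ (under-explored); other triples are fully explored. $\lambda_{\mathrm{cens},\ell}$: the pairs $(\pi_{k_j},\tau_{k_j})_{j<\ell}$ with all rewards removed; $\lambda_{\mathrm{hon},\ell}$: the same pairs with censoring set $\mathcal{U}_\ell$. Punish event $\mathcal{E}_{\mathrm{pun},\ell}=\{r_{\mu_\star}(x,a,h)\le\varepsilon_{\mathrm{pun}}\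 \forall(x,a,h)\notin\mathcal{U}_\ell\}$. At $k=k_\ell$: draw $\mu_{\mathrm{hal},\ell}$ from the posterior of $\mu_\star$ given $\lambda_{\mathrm{cens},\ell}$ and $\mathcal{E}_{\mathrm{pun},\ell}$, and form $\lambda_{\mathrm{hal},\ell}$ with censoring set $\mathcal{U}_\ell$ and each occurrence of a fully explored triple $(x,a,h)$ given an independent reward from $R_{\mu_{\mathrm{hal},\ell}}(x,a,h)$. The signal is $\lambda_{\mathrm{hal},\ell}$ at $k=k_\ell$ and $\lambda_{\mathrm{hon},\ell}$ otherwise in phase $\ell$. *)

theory Defs
  imports "HOL-Probability.Probability"
begin

(* States, actions and stages are 0-based: [S] = {..<S}, [A] = {..<A}, [H] = {..<H}. *)

record mdp =
  init  :: "nat pmf"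
  trans :: "nat \<Rightarrow> nat \<Rightarrow> nat \<Rightarrow> nat pmf"
  rew   :: "nat \<Rightarrow> nat \<Rightarrow> nat \<Rightarrow> real pmf"

type_synonym policy = "nat \<Rightarrow> nat \<Rightarrow> nat"          (* pi x h = action *)
type_synonym traj = "(nat \<times> nat \<times> real option) list" (* (x_h, a_h, r_h or removed); stage = position *)
type_synonym entries = "(policy \<times> traj) list"
type_synonym ledger = "(nat \<times> nat \<times> nat) set \<times> entries" (* censoring set, pairs *)

definition triples :: "nat \<Rightarrow> nat \<Rightarrow> nat \<Rightarrow> (nat \<times> nat \<times> nat) set" where
  "triples S A H = {(x, a, h). x < S \<and> a < A \<and> h < H}"

(* deterministic Markov policies [S] x [H] -> [A] (extensional: 0 outside the domain) *)
definition markov_policies :: "nat \<Rightarrow> nat \<Rightarrow> nat \<Rightarrow> policy set" where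
  "markov_policies S A H =
     {\<pi>. \<forall>x h. if x < S \<and> h < H then \<pi> x h < A else \<pi> x h = 0}"

definition mean_rew :: "mdp \<Rightarrow> nat \<Rightarrow> nat \<Rightarrow> nat \<Rightarrow> real" where
  "mean_rew \<mu> x a h = measure_pmf.expectation (rew \<mu> x a h) (\<lambda>r. r)"

(* running a policy: m remaining stages, starting at stage h in state x *)
primrec gen :: "mdp \<Rightarrow> policy \<Rightarrow> nat \<Rightarrow> nat \<Rightarrow> nat \<Rightarrow> traj pmf" where
  "gen \<mu> \<pi> h 0 x = return_pmf []"
| "gen \<mu> \<pi> h (Suc m) x =
     bind_pmf (rew \<mu> x (\<pi> x h) h) (\<lambda>r.
     bind_pmf (trans \<mu> x (\<pi> x h) h) (\<lambda>y.
     map_pmf (\<lambda>rest. (x, \<pi> x h, Some r) # rest) (gen \<mu> \<pi> (Suc h) m y)))"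

definition run :: "nat \<Rightarrow> mdp \<Rightarrow> policy \<Rightarrow> traj pmf" where
  "run H \<mu> \<pi> = bind_pmf (init \<mu>) (gen \<mu> \<pi> 0 H)"

primrec vtogo :: "mdp \<Rightarrow> policy \<Rightarrow> nat \<Rightarrow> nat \<Rightarrow> nat \<Rightarrow> real" where
  "vtogo \<mu> \<pi> h 0 x = 0"
| "vtogo \<mu> \<pi> h (Suc m) x =
     mean_rew \<mu> x (\<pi> x h) h
     + measure_pmf.expectation (trans \<mu> x (\<pi> x h) h) (vtogo \<mu> \<pi> (Suc h) m)"

definition mdp_value :: "nat \<Rightarrow> policy \<Rightarrow> mdp \<Rightarrow> real" where
  "mdp_value H \<pi> \<mu> = measure_pmf.expectation (init \<mu>) (vtogo \<mu> \<pi> 0 H)"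

definition censor :: "(nat \<times> nat \<times> nat) set \<Rightarrow> traj \<Rightarrow> traj" where
  "censor U \<tau> = map (\<lambda>(h, x, a, r). (x, a, if (x, a, h) \<in> U then None else r))
                     (zip [0..<length \<tau>] \<tau>)"

definition visits :: "nat \<times> nat \<times> nat \<Rightarrow> traj \<Rightarrow> bool" where
  "visits t \<tau> = (case t of (x, a, h) \<Rightarrow>
      h < length \<tau> \<and> fst (\<tau> ! h) = x \<and> fst (snd (\<tau> ! h)) = a)"

definition underexplored :: "nat \<Rightarrow> nat \<Rightarrow> nat \<Rightarrow> nat \<Rightarrow> entries \<Rightarrow> (nat \<times> nat \<times> nat) set" where
  "underexplored S A H nlrn es =
     {t \<in> triples S A H. length (filter (\<lambda>(\<pi>, \<tau>). visits t \<tau>) es) < nlrn}"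

definition cens_ledger :: "nat \<Rightarrow> nat \<Rightarrow> nat \<Rightarrow> entries \<Rightarrow> ledger" where
  "cens_ledger S A H es =
     (triples S A H, map (\<lambda>(\<pi>, \<tau>). (\<pi>, censor (triples S A H) \<tau>)) es)"

definition hon_ledger :: "nat \<Rightarrow> nat \<Rightarrow> nat \<Rightarrow> nat \<Rightarrow> entries \<Rightarrow> ledger" where
  "hon_ledger S A H nlrn es =
     (let U = underexplored S A H nlrn es
      in (U, map (\<lambda>(\<pi>, \<tau>). (\<pi>, censor U \<tau>)) es))"

fun hal_traj :: "mdp \<Rightarrow> (nat \<times> nat \<times> nat) set \<Rightarrow> nat \<Rightarrow> traj \<Rightarrow> traj pmf" where
  "hal_traj \<mu> U h [] = return_pmf []"
| "hal_traj \<mu> U h ((x, a, r) # \<tau>) =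
     (if (x, a, h) \<in> U
      then map_pmf (\<lambda>rest. (x, a, None) # rest) (hal_traj \<mu> U (Suc h) \<tau>)
      else bind_pmf (rew \<mu> x a h) (\<lambda>r'.
             map_pmf (\<lambda>rest. (x, a, Some r') # rest) (hal_traj \<mu> U (Suc h) \<tau>)))"

primrec hal_entries :: "mdp \<Rightarrow> (nat \<times> nat \<times> nat) set \<Rightarrow> entries \<Rightarrow> entries pmf" where
  "hal_entries \<mu> U [] = return_pmf []"
| "hal_entries \<mu> U (e # es) =
     bind_pmf (hal_traj \<mu> U 0 (snd e)) (\<lambda>\<tau>'.
     map_pmf (\<lambda>rest. (fst e, \<tau>') # rest) (hal_entries \<mu> U es))"

definition hal_ledger :: "mdp \<Rightarrow> (nat \<times> nat \<times> nat) set \<Rightarrow> entries \<Rightarrow> ledger pmf" where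
  "hal_ledger \<mu> U es = map_pmf (\<lambda>es'. (U, es')) (hal_entries \<mu> U es)"

definition Epun :: "nat \<Rightarrow> nat \<Rightarrow> nat \<Rightarrow> real \<Rightarrow> (nat \<times> nat \<times> nat) set \<Rightarrow> mdp set" where
  "Epun S A H eps U = {\<mu>. \<forall>(x, a, h) \<in> triples S A H - U. mean_rew \<mu> x a h \<le> eps}"

(* Law of lambda_hal given the realized censored ledger c = lambda_cens.
   ch mu is the law (given mu_star = mu) of the recorded hallucination-episode history
   of the previous phases.  mu_hal is drawn from the (true Bayesian) posterior of mu_star
   given lambda_cens = c and E_pun, then the rewards are drawn from R_{mu_hal};
   mu_hal is integrated out. *)
definition hal_kernel ::
  "mdp measure \<Rightarrow> nat \<Rightarrow> nat \<Rightarrow> nat \<Rightarrow> nat \<Rightarrow> real \<Rightarrow> (mdp \<Rightarrow> entries pmf) \<Rightarrow> ledger \<Rightarrow> ledger pmf" where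
  "hal_kernel P S A H nlrn eps ch c =
     (let U = underexplored S A H nlrn (snd c);
          E = Epun S A H eps U;
          w = (\<lambda>\<mu>. pmf (map_pmf (cens_ledger S A H) (ch \<mu>)) c);
          ZE = (\<integral>\<mu>. indicator E \<mu> * w \<mu> \<partial>P);
          Z = (\<integral>\<mu>. w \<mu> \<partial>P)
      in if 0 < ZE then
           embed_pmf (\<lambda>l. (\<integral>\<mu>. indicator E \<mu> * w \<mu> * pmf (hal_ledger \<mu> U (snd c)) l \<partial>P) / ZE)
         else if 0 < Z then
           embed_pmf (\<lambda>l. (\<integral>\<mu>. w \<mu> * pmf (hal_ledger \<mu> U (snd c)) l \<partial>P) / Z)
         else return_pmf c)"

(* law of the signal sigma_k of an episode k of phase l given mu_star = mu:
   lambda_hal with probability 1/N_ph (k = k_l), lambda_hon otherwise *)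
definition signal ::
  "mdp measure \<Rightarrow> nat \<Rightarrow> nat \<Rightarrow> nat \<Rightarrow> nat \<Rightarrow> nat \<Rightarrow> real \<Rightarrow> (mdp \<Rightarrow> entries pmf) \<Rightarrow> mdp \<Rightarrow> ledger pmf" where
  "signal P S A H Nph nlrn eps ch \<mu> =
     bind_pmf (bernoulli_pmf (1 / real Nph)) (\<lambda>b.
       if b then bind_pmf (ch \<mu>) (\<lambda>es. hal_kernel P S A H nlrn eps ch (cens_ledger S A H es))
       else map_pmf (hon_ledger S A H nlrn) (ch \<mu>))"

definition post_value ::
  "mdp measure \<Rightarrow> nat \<Rightarrow> nat \<Rightarrow> nat \<Rightarrow> nat \<Rightarrow> nat \<Rightarrow> real \<Rightarrow> (mdp \<Rightarrow> entries pmf) \<Rightarrow> policy \<Rightarrow> ledger \<Rightarrow> real" where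
  "post_value P S A H Nph nlrn eps ch \<pi> s =
     (\<integral>\<mu>. mdp_value H \<pi> \<mu> * pmf (signal P S A H Nph nlrn eps ch \<mu>) s \<partial>P)
     / (\<integral>\<mu>. pmf (signal P S A H Nph nlrn eps ch \<mu>) s \<partial>P)"

definition agent_choice ::
  "mdp measure \<Rightarrow> nat \<Rightarrow> nat \<Rightarrow> nat \<Rightarrow> nat \<Rightarrow> nat \<Rightarrow> real \<Rightarrow> (nat \<Rightarrow> ledger \<Rightarrow> policy set \<Rightarrow> policy)
     \<Rightarrow> (mdp \<Rightarrow> entries pmf) \<Rightarrow> nat \<Rightarrow> ledger \<Rightarrow> policy" where
  "agent_choice P S A H Nph nlrn eps tb ch k s =
     tb k s {\<pi> \<in> markov_policies S A H. \<forall>\<pi>' \<in> markov_policies S A H.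
               post_value P S A H Nph nlrn eps ch \<pi>' s \<le> post_value P S A H Nph nlrn eps ch \<pi> s}"

(* one more phase (phase n+1, episodes n*Nph+1 .. (n+1)*Nph); only the hallucination
   episode k_{n+1} is recorded, as only those enter the ledgers *)
definition next_phase ::
  "mdp measure \<Rightarrow> nat \<Rightarrow> nat \<Rightarrow> nat \<Rightarrow> nat \<Rightarrow> nat \<Rightarrow> real \<Rightarrow> (nat \<Rightarrow> ledger \<Rightarrow> policy set \<Rightarrow> policy)
     \<Rightarrow> nat \<Rightarrow> (mdp \<Rightarrow> entries pmf) \<Rightarrow> mdp \<Rightarrow> entries pmf" where
  "next_phase P S A H Nph nlrn eps tb n ch \<mu> =
     bind_pmf (ch \<mu>) (\<lambda>es.
     bind_pmf (pmf_of_set {n * Nph + 1 .. Suc n * Nph}) (\<lambda>k.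
     bind_pmf (hal_kernel P S A H nlrn eps ch (cens_ledger S A H es)) (\<lambda>l.
       let \<pi> = agent_choice P S A H Nph nlrn eps tb ch k l
       in map_pmf (\<lambda>\<tau>. es @ [(\<pi>, \<tau>)]) (run H \<mu> \<pi>))))"

(* law, given mu_star = mu, of the pairs (pi_{k_j}, tau_{k_j})_{j <= n} (uncensored) *)
primrec hh_history ::
  "mdp measure \<Rightarrow> nat \<Rightarrow> nat \<Rightarrow> nat \<Rightarrow> nat \<Rightarrow> nat \<Rightarrow> real \<Rightarrow> (nat \<Rightarrow> ledger \<Rightarrow> policy set \<Rightarrow> policy)
     \<Rightarrow> nat \<Rightarrow> mdp \<Rightarrow> entries pmf" where
  "hh_history P S A H Nph nlrn eps tb 0 = (\<lambda>\<mu>. return_pmf [])"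
| "hh_history P S A H Nph nlrn eps tb (Suc n) =
     next_phase P S A H Nph nlrn eps tb n (hh_history P S A H Nph nlrn eps tb n)"

definition true_posterior ::
  "mdp measure \<Rightarrow> (mdp \<Rightarrow> entries pmf) \<Rightarrow> (entries \<Rightarrow> ledger) \<Rightarrow> ledger \<Rightarrow> mdp set \<Rightarrow> real" where
  "true_posterior P hist L l B =
     (\<integral>\<mu>. indicator B \<mu> * pmf (map_pmf L (hist \<mu>)) l \<partial>P)
     / (\<integral>\<mu>. pmf (map_pmf L (hist \<mu>)) l \<partial>P)"

(* Pr[lam_hat' = l | mu_star = mu] for the canonical ledger: each pi_i run once independently *)
definition can_likelihood :: "nat \<Rightarrow> ledger \<Rightarrow> mdp \<Rightarrow> real" where
  "can_likelihood H l \<mu> =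
     prod_list (map (\<lambda>(\<pi>, \<tau>). pmf (map_pmf (censor (fst l)) (run H \<mu> \<pi>)) \<tau>) (snd l))"

definition can_posterior :: "mdp measure \<Rightarrow> nat \<Rightarrow> ledger \<Rightarrow> mdp set \<Rightarrow> real" where
  "can_posterior P H l B =
     (\<integral>\<mu>. indicator B \<mu> * can_likelihood H l \<mu> \<partial>P) / (\<integral>\<mu>. can_likelihood H l \<mu> \<partial>P)"

end

theory Submission
  imports Defs
begin


definition cmap :: "(nat \<times> nat \<times> nat) set \<Rightarrow> entries \<Rightarrow> entries" where
  "cmap U es = map (\<lambda>(\<pi>, \<tau>). (\<pi>, censor U \<tau>)) es"

definition lik :: "nat \<Rightarrow> (nat \<times> nat \<times> nat) set \<Rightarrow> entries \<Rightarrow> mdp \<Rightarrow> real" where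
  "lik H U e \<mu> = prod_list (map (\<lambda>(\<pi>, \<tau>). pmf (map_pmf (censor U) (run H \<mu> \<pi>)) \<tau>) e)"

lemma length_censor[simp]: "length (censor U \<tau>) = length \<tau>"
  by (simp add: censor_def)

lemma nth_censor: "h < length \<tau> \<Longrightarrow> censor U \<tau> ! h =
   (fst (\<tau>!h), fst (snd (\<tau>!h)), if (fst (\<tau>!h), fst (snd (\<tau>!h)), h) \<in> U then None else snd (snd (\<tau>!h)))"
  by (simp add: censor_def split: prod.splits)

lemma censor_censor: "U \<subseteq> T \<Longrightarrow> censor T (censor U \<tau>) = censor T \<tau>"
  by (rule nth_equalityI) (auto simp: nth_censor)

lemma cmap_cmap: "U \<subseteq> T \<Longrightarrow> cmap T (cmap U es) = cmap T es"
  by (auto simp: cmap_def censor_censor)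

lemma visits_censor: "visits t (censor U \<tau>) = visits t \<tau>"
  by (auto simp: visits_def nth_censor split: prod.splits)

lemma underexplored_cmap: "underexplored S A H nlrn (cmap U es) = underexplored S A H nlrn es"
proof -
  have "filter (\<lambda>(\<pi>, \<tau>). visits t \<tau>) (cmap U es) = cmap U (filter (\<lambda>(\<pi>, \<tau>). visits t \<tau>) es)" for t
    by (induction es) (auto simp: cmap_def visits_censor)
  then show ?thesis unfolding underexplored_def by (simp add: cmap_def)
qed

lemma pmf_bind_inj:
  assumes inj: "\<And>a b a' b'. f a b = f a' b' \<Longrightarrow> a = a' \<and> b = b'"
  shows "pmf (bind_pmf M (\<lambda>a. map_pmf (f a) (D a))) (f a0 b0) = pmf M a0 * pmf (D a0) b0"
proof -
  have eq: "pmf (map_pmf (f a) (D a)) (f a0 b0) = indicator {a0} a * pmf (D a0) b0" for a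
  proof (cases "a = a0")
    case True
    have "inj (f a0)" using inj by (meson injI)
    then show ?thesis using True by (simp add: pmf_map_inj')
  next
    case False
    have "f a0 b0 \<notin> set_pmf (map_pmf (f a) (D a))" using inj False by auto
    then show ?thesis using False by (simp add: set_pmf_eq)
  qed
  show ?thesis
    by (simp add: pmf_bind eq measure_pmf_single)
qed

definition Qf where
  "Qf P S A H Nph nlrn eps tb n ch c =
     bind_pmf (pmf_of_set {n * Nph + 1 .. Suc n * Nph}) (\<lambda>k.
       map_pmf (\<lambda>l. agent_choice P S A H Nph nlrn eps tb ch k l) (hal_kernel P S A H nlrn eps ch c))"

lemma next_phase_cmap:
  assumes "U \<subseteq> triples S A H"
  shows "map_pmf (cmap U) (next_phase P S A H Nph nlrn eps tb n ch \<mu>) =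
    bind_pmf (map_pmf (cmap U) (ch \<mu>)) (\<lambda>e. map_pmf (\<lambda>x. e @ [x])
      (bind_pmf (Qf P S A H Nph nlrn eps tb n ch (triples S A H, cmap (triples S A H) e))
        (\<lambda>\<pi>. map_pmf (Pair \<pi>) (map_pmf (censor U) (run H \<mu> \<pi>)))))"
proof -
  have c: "cens_ledger S A H es = (triples S A H, cmap (triples S A H) (cmap U es))" for es
    using cmap_cmap[OF assms] by (simp add: cens_ledger_def cmap_def)
  have cm: "cmap U (es @ [(\<pi>, \<tau>)]) = cmap U es @ [(\<pi>, censor U \<tau>)]" for es \<pi> \<tau>
    by (simp add: cmap_def)
  show ?thesis
    unfolding next_phase_def Qf_def Let_def
    by (simp add: map_bind_pmf bind_map_pmf bind_assoc_pmf map_pmf_comp c cm o_def bind_return_pmf map_pmf_def[symmetric])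
qed

lemma lik_snoc: "lik H U (e @ [(\<pi>, \<tau>)]) \<mu> = lik H U e \<mu> * pmf (map_pmf (censor U) (run H \<mu> \<pi>)) \<tau>"
  by (simp add: lik_def)

lemma hist_factor:
  assumes "U \<subseteq> triples S A H"
  shows "\<exists>c. \<forall>\<mu>. pmf (map_pmf (cmap U) (hh_history P S A H Nph nlrn eps tb n \<mu>)) e'
            = c * lik H U e' \<mu>"
proof (induction n arbitrary: e')
  case 0
  show ?case
    by (rule exI[of _ "if e' = [] then 1 else 0"]) (auto simp: lik_def cmap_def pmf_return)
next
  case (Suc n)
  show ?case
  proof (cases e' rule: rev_cases)
    case Nil
    have "pmf (map_pmf (cmap U) (hh_history P S A H Nph nlrn eps tb (Suc n) \<mu>)) e' = 0" for \<mu>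
      unfolding Nil hh_history.simps next_phase_cmap[OF assms]
      by (simp add: pmf_eq_0_set_pmf) blast
    then show ?thesis by auto
  next
    case (snoc e0 x0)
    obtain \<pi>0 \<tau>0 where x0: "x0 = (\<pi>0, \<tau>0)" by force
    obtain c0 where c0: "\<forall>\<mu>. pmf (map_pmf (cmap U) (hh_history P S A H Nph nlrn eps tb n \<mu>)) e0
            = c0 * lik H U e0 \<mu>" using Suc by blast
    define q where "q = pmf (Qf P S A H Nph nlrn eps tb n (hh_history P S A H Nph nlrn eps tb n)
        (triples S A H, cmap (triples S A H) e0)) \<pi>0"
    have "pmf (map_pmf (cmap U) (hh_history P S A H Nph nlrn eps tb (Suc n) \<mu>)) e' = (c0 * q) * lik H U e' \<mu>" for \<mu>
    proof -
      have "pmf (map_pmf (cmap U) (hh_history P S A H Nph nlrn eps tb (Suc n) \<mu>)) e'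
        = pmf (map_pmf (cmap U) (hh_history P S A H Nph nlrn eps tb n \<mu>)) e0 *
          pmf (bind_pmf (Qf P S A H Nph nlrn eps tb n (hh_history P S A H Nph nlrn eps tb n)
             (triples S A H, cmap (triples S A H) e0))
             (\<lambda>\<pi>. map_pmf (Pair \<pi>) (map_pmf (censor U) (run H \<mu> \<pi>)))) x0"
        unfolding snoc hh_history.simps next_phase_cmap[OF assms]
        by (rule pmf_bind_inj[where f = "\<lambda>e x. e @ [x]"]) auto
      also have "\<dots> = pmf (map_pmf (cmap U) (hh_history P S A H Nph nlrn eps tb n \<mu>)) e0 *
          (q * pmf (map_pmf (censor U) (run H \<mu> \<pi>0)) \<tau>0)"
        unfolding x0 q_def
        by (subst pmf_bind_inj[where f = Pair]) auto
      finally show ?thesis using c0 unfolding snoc x0 lik_snoc by simp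
    qed
    then show ?thesis by blast
  qed
qed

lemma can_lik: "can_likelihood H l \<mu> = lik H (fst l) (snd l) \<mu>"
  by (simp add: can_likelihood_def lik_def)

lemma ledger_factor:
  assumes "L \<in> {cens_ledger S A H, hon_ledger S A H nlrn}"
  shows "\<exists>c. \<forall>\<mu>. pmf (map_pmf L (hh_history P S A H Nph nlrn eps tb n \<mu>)) l
            = c * can_likelihood H l \<mu>"
proof -
  obtain U0 e0 where l: "l = (U0, e0)" by force
  have pre: "L -` {l} = (if U0 \<subseteq> triples S A H \<and> (L = cens_ledger S A H \<longrightarrow> U0 = triples S A H)
       \<and> (L \<noteq> cens_ledger S A H \<longrightarrow> underexplored S A H nlrn e0 = U0) then cmap U0 -` {e0} else {})"
  proof (cases "L = cens_ledger S A H")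
    case True
    then show ?thesis by (auto simp: l cens_ledger_def cmap_def)
  next
    case False
    then have L: "L = hon_ledger S A H nlrn" using assms by auto
    have ut: "underexplored S A H nlrn es \<subseteq> triples S A H" for es
      by (auto simp: underexplored_def)
    have hon: "hon_ledger S A H nlrn es = (underexplored S A H nlrn es, cmap (underexplored S A H nlrn es) es)" for es
      by (simp add: hon_ledger_def cmap_def Let_def)
    have "hon_ledger S A H nlrn es = l \<longleftrightarrow>
        (U0 \<subseteq> triples S A H \<and> underexplored S A H nlrn e0 = U0 \<and> cmap U0 es = e0)" for es
      using ut[of es] underexplored_cmap[of S A H nlrn U0 es] unfolding hon l by auto
    then show ?thesis using False unfolding L by auto
  qed
  show ?thesis
  proof (cases "U0 \<subseteq> triples S A H \<and> (L = cens_ledger S A H \<longrightarrow> U0 = triples S A H)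
       \<and> (L \<noteq> cens_ledger S A H \<longrightarrow> underexplored S A H nlrn e0 = U0)")
    case True
    obtain c where c: "\<forall>\<mu>. pmf (map_pmf (cmap U0) (hh_history P S A H Nph nlrn eps tb n \<mu>)) e0
            = c * lik H U0 e0 \<mu>" using hist_factor True by blast
    show ?thesis
      by (rule exI[of _ c]) (use c True in \<open>simp add: pmf_map pre[unfolded l] can_lik l\<close>)
  next
    case False
    then have "L -` {l} = {}" using pre by (metis (full_types))
    then show ?thesis by (intro exI[of _ 0]) (simp add: pmf_map)
  qed
qed



theorem lemma1:
  fixes P :: "mdp measure" and S A H Nph nlrn :: nat and eps :: real
    and Rvals :: "real set"
    and tb :: "nat \<Rightarrow> ledger \<Rightarrow> policy set \<Rightarrow> policy"
  assumes prior: "prob_space P"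
    and pos: "0 < S" "0 < A" "0 < H" "0 < Nph"
    and Rvals: "countable Rvals" "Rvals \<subseteq> {0..1}"
    and models: "\<forall>\<mu>\<in>space P. set_pmf (init \<mu>) \<subseteq> {..<S} \<and>
        (\<forall>x a h. x < S \<longrightarrow> a < A \<longrightarrow> h < H \<longrightarrow>
           set_pmf (trans \<mu> x a h) \<subseteq> {..<S} \<and> set_pmf (rew \<mu> x a h) \<subseteq> Rvals)"
    and meas_init: "\<forall>y. (\<lambda>\<mu>. pmf (init \<mu>) y) \<in> borel_measurable P"
    and meas_trans: "\<forall>x a h y. (\<lambda>\<mu>. pmf (trans \<mu> x a h) y) \<in> borel_measurable P"
    and meas_rew: "\<forall>x a h r. (\<lambda>\<mu>. pmf (rew \<mu> x a h) r) \<in> borel_measurable P"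
    and tiebreak: "\<forall>k s X. X \<noteq> {} \<longrightarrow> tb k s X \<in> X"
  shows "\<forall>ph::nat. 1 \<le> ph \<longrightarrow>
           (\<forall>L \<in> {cens_ledger S A H, hon_ledger S A H nlrn}. \<forall>l B.
              B \<in> sets P \<and>
              0 < (\<integral>\<mu>. pmf (map_pmf L (hh_history P S A H Nph nlrn eps tb (ph - 1) \<mu>)) l \<partial>P)
              \<longrightarrow> true_posterior P (hh_history P S A H Nph nlrn eps tb (ph - 1)) L l B
                  = can_posterior P H l B)"
proof (intro allI impI ballI conjI)
  fix ph :: nat and L l and B :: "mdp set"
  assume L: "L \<in> {cens_ledger S A H, hon_ledger S A H nlrn}"
    and h: "B \<in> sets P \<and> 0 < (\<integral>\<mu>. pmf (map_pmf L (hh_history P S A H Nph nlrn eps tb (ph - 1) \<mu>)) l \<partial>P)"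
  obtain c where c: "\<forall>\<mu>. pmf (map_pmf L (hh_history P S A H Nph nlrn eps tb (ph - 1) \<mu>)) l
            = c * can_likelihood H l \<mu>" using ledger_factor[OF L] by blast
  have pos: "0 < c * (\<integral>\<mu>. can_likelihood H l \<mu> \<partial>P)" using h c by simp
  then have "c \<noteq> 0" by auto
  then show "true_posterior P (hh_history P S A H Nph nlrn eps tb (ph - 1)) L l B = can_posterior P H l B"
    unfolding true_posterior_def can_posterior_def using c
    by (simp add: mult.left_commute[of _ c])
qed

end
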